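(* In the single-node mining process with $\phi(s)=s^a$, the expected total number of hash attempts needed for the node to build a block-chain of length $L\ge1$ is at most $$\frac{D_s}{R^a}\sum_{n=0}^{L-1}\frac{1}{(n+1)^a}.$$
   Context: Fix real parameters $M>0$ (scale of the system), $R>0$ (the stake reward StakRwd), $0<D_c\le D_s$ (coin-issue difficulty constant CoinD and stake-issue difficulty constant StakD), and $0<a<1$. Put $p=D_c/D_s$, $q=1-p$. Single-node mining process with threshold function $\phi$: a node, who makes no stake transactions with anybody, starts with stake $S_0=0$. For $n=0,1,2,\dots$ the $(n+1)$-th block is produced as follows: the node makes successive hash attempts, each producing a hash value uniformly distributed on $[0,M]$, independent of all previous randomness; the block is created at the first attempt whose hash $h$ satisfies $h\le M\phi(R+S_n)/D_c$ (the coin-issue threshold), and then $S_{n+1}=S_n+R$ if moreover $h\le M\phi(R+S_n)/D_s$ (the stake-issue threshold), otherwise $S_{n+1}=S_n$. Assume $0<\phi(R+S)\le D_c$ for all $S\in\{0,R,2R,\dots,(L-1)R\}$. Time is measured as the total number of hash attempts. In this statement $\phi(s)=s^a$ (radical stake system with equal exponent $a$). *)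

theory Defs
  imports "HOL-Probability.Probability"
begin

definition hash_space :: "real \<Rightarrow> real stream measure" where
  "hash_space M = stream_space (uniform_measure lborel {0..M})"

text \<open>State (number of blocks produced so far, current stake) after t hash attempts,
  for the single-node mining process with threshold function phi, scale M,
  stake reward R, difficulty constants Dc (coin issue) and Ds (stake issue).\<close>
fun mine_state ::
  "real \<Rightarrow> real \<Rightarrow> real \<Rightarrow> real \<Rightarrow> (real \<Rightarrow> real) \<Rightarrow> real stream \<Rightarrow> nat \<Rightarrow> nat \<times> real" where
  "mine_state M R Dc Ds phi w 0 = (0, 0)"
| "mine_state M R Dc Ds phi w (Suc t) =
     (let st = mine_state M R Dc Ds phi w t; n = fst st; S = snd st; h = w !! t in
      if h \<le> M * phi (R + S) / Dc
      then (Suc n, if h \<le> M * phi (R + S) / Ds then S + R else S)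
      else (n, S))"

text \<open>Total number of hash attempts needed to build a chain of length L
  (the number of attempts made while fewer than L blocks exist; infinite if never reached).\<close>
definition mining_time ::
  "real \<Rightarrow> real \<Rightarrow> real \<Rightarrow> real \<Rightarrow> (real \<Rightarrow> real) \<Rightarrow> nat \<Rightarrow> real stream \<Rightarrow> ennreal" where
  "mining_time M R Dc Ds phi L w =
     (\<integral>\<^sup>+ t. (if fst (mine_state M R Dc Ds phi w t) < L then 1 else 0) \<partial>count_space (UNIV :: nat set))"

end

theory Submission
  imports Defs
begin


definition U :: "real \<Rightarrow> nat \<Rightarrow> nat \<Rightarrow> real" where
  "U p m j = (\<Sum>k\<le>m. real (m choose k) * p^k * (1-p)^(m-k) / (real j + real k + 1))"

lemma U_0: "U p 0 j = 1 / (real j + 1)"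
  by (simp add: U_def)

lemma U_nonneg: "0 \<le> p \<Longrightarrow> p \<le> 1 \<Longrightarrow> 0 \<le> U p m j"
  unfolding U_def by (intro sum_nonneg) auto

lemma U_Suc: "U p (Suc m) j = p * U p m (Suc j) + (1-p) * U p m j"
proof -
  define q where "q = 1 - p"
  define g where "g k = real (m choose k) * p^k * q^(Suc m - k) / (real j + real k + 1)" for k
  define S2 where "S2 = (\<Sum>k\<le>m. real (m choose Suc k) * p^Suc k * q^(m-k) / (real j + real k + 2))"
  have h1: "U p (Suc m) j = q^(Suc m) / (real j + 1) + (\<Sum>k\<le>m. real (m choose k) * p^Suc k * q^(m-k) / (real j + real k + 2)) + S2"
  proof -
    have "U p (Suc m) j = (\<Sum>k\<le>Suc m. real (Suc m choose k) * p^k * q^(Suc m-k) / (real j + real k + 1))"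
      by (simp add: U_def q_def)
    also have "\<dots> = q^(Suc m) / (real j + 1) + (\<Sum>k\<le>m. real (Suc m choose Suc k) * p^Suc k * q^(m-k) / (real j + real k + 2))"
      by (subst sum.atMost_Suc_shift) (simp add: add_ac)
    also have "\<dots> = q^(Suc m) / (real j + 1) + (\<Sum>k\<le>m. real (m choose k) * p^Suc k * q^(m-k) / (real j + real k + 2)) + S2"
      by (simp add: S2_def sum.distrib[symmetric] add_divide_distrib[symmetric] distrib_right)
    finally show ?thesis .
  qed
  have h2: "(\<Sum>k\<le>m. real (m choose k) * p^Suc k * q^(m-k) / (real j + real k + 2)) = p * U p m (Suc j)"
    unfolding U_def sum_distrib_left q_def
    by (intro sum.cong refl) (simp add: add_ac mult_ac)
  have h3: "q^(Suc m) / (real j + 1) + S2 = q * U p m j"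
  proof -
    have "q^(Suc m) / (real j + 1) + S2 = (\<Sum>k\<le>Suc m. g k)"
      by (subst sum.atMost_Suc_shift) (simp add: g_def S2_def add_ac)
    also have "\<dots> = (\<Sum>k\<le>m. g k)"
      by (simp add: g_def)
    also have "\<dots> = q * U p m j"
      unfolding U_def sum_distrib_left q_def[symmetric] g_def
      by (intro sum.cong refl) (simp add: Suc_diff_le)
    finally show ?thesis .
  qed
  show ?thesis using h1 h2 h3 by (simp add: q_def)
qed

lemma U_bound:
  assumes "0 < p" "p \<le> 1"
  shows "U p m 0 \<le> 1 / (p * (real m + 1))"
proof -
  define q where "q = 1 - p"
  have "real (Suc m) * p * U p m 0 = (\<Sum>k\<le>m. real (Suc m choose Suc k) * p^Suc k * q^(m-k))"
    unfolding U_def sum_distrib_left q_def[symmetric]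
  proof (intro sum.cong refl)
    fix k assume "k \<in> {..m}"
    have e: "real (Suc m) * real (m choose k) = real (Suc m choose Suc k) * real (Suc k)"
      using Suc_times_binomial_eq[of m k] by (metis of_nat_mult)
    have "real (Suc m) * p * (real (m choose k) * p ^ k * q ^ (m - k) / (real 0 + real k + 1))
        = (real (Suc m) * real (m choose k)) * p^Suc k * q^(m-k) / real (Suc k)"
      by (simp add: field_simps)
    also have "\<dots> = real (Suc m choose Suc k) * p^Suc k * q^(m-k)"
      by (subst e) (simp add: field_simps del: of_nat_Suc)
    finally show "real (Suc m) * p * (real (m choose k) * p ^ k * q ^ (m - k) / (real 0 + real k + 1))
        = real (Suc m choose Suc k) * p ^ Suc k * q ^ (m - k)" .
  qed
  also have "\<dots> \<le> q^(Suc m) + (\<Sum>k\<le>m. real (Suc m choose Suc k) * p^Suc k * q^(m-k))"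
    using assms by (simp add: q_def)
  also have "\<dots> = (\<Sum>k\<le>Suc m. real (Suc m choose k) * p^k * q^(Suc m-k))"
    by (subst sum.atMost_Suc_shift) simp
  also have "\<dots> = (p + q)^Suc m"
    by (rule binomial_ring[symmetric])
  also have "\<dots> = 1" by (simp add: q_def)
  finally have "real (Suc m) * p * U p m 0 \<le> 1" .
  then have "U p m 0 * (p * (real m + 1)) \<le> 1" by (simp add: algebra_simps)
  then show ?thesis using assms by (subst pos_le_divide_eq) auto
qed

lemma tangent_powr:
  fixes t a :: real assumes "0 \<le> t" "0 < a" "a < 1"
  shows "t powr a \<le> a * t + (1 - a)"
proof (cases "t = 0")
  case True then show ?thesis using assms by simp
next
  case False
  then have "t powr a * 1 powr (1-a) \<le> a * t + (1-a) * 1"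
    using assms by (intro Youngs_inequality_0) auto
  then show ?thesis by simp
qed

lemma concave_powr_mix:
  fixes x y p a :: real
  assumes "0 \<le> x" "0 \<le> y" "0 \<le> p" "p \<le> 1" "0 < a" "a < 1"
  shows "p * x powr a + (1-p) * y powr a \<le> (p*x + (1-p)*y) powr a"
proof (cases "p*x + (1-p)*y = 0")
  case True
  then have "p * x = 0" "(1-p)*y = 0" using assms
    by (smt (verit) mult_nonneg_nonneg)+
  then show ?thesis using assms by auto
next
  case False
  define z where "z = p*x + (1-p)*y"
  have zp: "z > 0" using False assms unfolding z_def
    by (smt (verit) mult_nonneg_nonneg)
  have hx: "(x/z) powr a \<le> a * (x/z) + (1-a)" using assms zp by (intro tangent_powr) auto
  have hy: "(y/z) powr a \<le> a * (y/z) + (1-a)" using assms zp by (intro tangent_powr) auto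
  have "p * x powr a + (1-p) * y powr a = z powr a * (p * (x/z) powr a + (1-p) * (y/z) powr a)"
    using zp assms by (simp add: powr_divide field_simps)
  also have "\<dots> \<le> z powr a * (p * (a * (x/z) + (1-a)) + (1-p) * (a * (y/z) + (1-a)))"
    using hx hy assms by (intro mult_left_mono add_mono mult_left_mono) auto
  also have "p * (a * (x/z) + (1-a)) + (1-p) * (a * (y/z) + (1-a)) = a * ((p*x + (1-p)*y)/z) + (1-a)"
    using zp by (simp add: field_simps)
  also have "\<dots> = 1" using zp by (simp add: z_def[symmetric])
  finally show ?thesis by (simp add: z_def)
qed



primrec fwd :: "('s \<Rightarrow> real \<Rightarrow> 's) \<Rightarrow> 's \<Rightarrow> real stream \<Rightarrow> nat \<Rightarrow> 's" where
  "fwd g x w 0 = x"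
| "fwd g x w (Suc t) = g (fwd g x w t) (w !! t)"

lemma fwd_Cons: "fwd g x (h ## w) (Suc t) = fwd g (g x h) w t"
  by (induction t) auto

lemma fwd_meas:
  fixes g :: "'s::countable \<Rightarrow> real \<Rightarrow> 's"
  assumes g: "\<And>i. g i \<in> measurable N (count_space UNIV)"
  shows "(\<lambda>w. fwd g x w t) \<in> measurable (stream_space N) (count_space UNIV)"
proof (induction t)
  case 0 then show ?case by simp
next
  case (Suc t)
  have "(\<lambda>w. (\<lambda>i w. g i (w !! t)) (fwd g x w t) w) \<in> measurable (stream_space N) (count_space UNIV)"
    by (rule measurable_compose_countable[OF _ Suc]) (rule measurable_compose[OF measurable_snth g])
  then show ?case by simp
qed

lemma fwd_bound:
  fixes g :: "'s::countable \<Rightarrow> real \<Rightarrow> 's" and ind F :: "'s \<Rightarrow> ennreal"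
  assumes P: "prob_space N"
    and g: "\<And>i. g i \<in> measurable N (count_space UNIV)"
    and F: "\<And>x. ind x + (\<integral>\<^sup>+h. F (g x h) \<partial>N) \<le> F x"
  shows "(\<integral>\<^sup>+w. (\<Sum>t<T. ind (fwd g x w t)) \<partial>stream_space N) \<le> F x"
proof (induction T arbitrary: x)
  case 0 then show ?case by simp
next
  case (Suc T)
  interpret prob_space N by (rule P)
  interpret S: prob_space "stream_space N" by (rule prob_space_stream_space)
  have mi: "(\<lambda>w. ind (fwd g y w t)) \<in> borel_measurable (stream_space N)" for y t
    by (rule measurable_compose[OF fwd_meas[OF g]]) simp
  have ms: "(\<lambda>w. \<Sum>t<T'. ind (fwd g y w t)) \<in> borel_measurable (stream_space N)" for y T'
    using mi by (intro borel_measurable_sum) auto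
  have mF: "(\<lambda>h. F (g x h)) \<in> borel_measurable N"
    by (rule measurable_compose[OF g]) simp
  have "(\<integral>\<^sup>+w. (\<Sum>t<Suc T. ind (fwd g x w t)) \<partial>stream_space N)
      = (\<integral>\<^sup>+h. (\<integral>\<^sup>+w. (\<Sum>t<Suc T. ind (fwd g x (h ## w) t)) \<partial>stream_space N) \<partial>N)"
    by (rule nn_integral_stream_space[OF ms])
  also have "\<dots> = (\<integral>\<^sup>+h. (\<integral>\<^sup>+w. ind x + (\<Sum>t<T. ind (fwd g (g x h) w t)) \<partial>stream_space N) \<partial>N)"
    by (simp only: sum.lessThan_Suc_shift fwd_Cons fwd.simps(1))
  also have "\<dots> = (\<integral>\<^sup>+h. ind x + (\<integral>\<^sup>+w. (\<Sum>t<T. ind (fwd g (g x h) w t)) \<partial>stream_space N) \<partial>N)"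
    by (intro nn_integral_cong) (simp add: nn_integral_add ms S.emeasure_space_1)
  also have "\<dots> \<le> (\<integral>\<^sup>+h. ind x + F (g x h) \<partial>N)"
    by (intro nn_integral_mono add_left_mono Suc.IH)
  also have "\<dots> = ind x + (\<integral>\<^sup>+h. F (g x h) \<partial>N)"
    by (simp add: nn_integral_add mF emeasure_space_1)
  also have "\<dots> \<le> F x" by (rule F)
  finally show ?case .
qed



lemma int3:
  fixes M t1 t2 :: real and A B C :: ennreal
  assumes "M > 0" "0 \<le> t1" "t1 \<le> t2" "t2 \<le> M"
  shows "(\<integral>\<^sup>+h. (if h \<le> t2 then (if h \<le> t1 then A else B) else C) \<partial>uniform_measure lborel {0..M})
     = ennreal (t1/M) * A + ennreal ((t2-t1)/M) * B + ennreal ((M-t2)/M) * C"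
proof -
  let ?N = "uniform_measure lborel {0..M}"
  have pw: "(if h \<le> t2 then (if h \<le> t1 then A else B) else C)
     = A * indicator {..t1} h + B * indicator {t1<..t2} h + C * indicator {t2<..} h" for h
    using assms by (auto simp: indicator_def)
  have e1: "emeasure ?N {..t1} = ennreal (t1/M)"
  proof -
    have "{0..M} \<inter> {..t1} = {0..t1}" using assms by auto
    then show ?thesis using assms by (simp add: divide_ennreal)
  qed
  have e2: "emeasure ?N {t1<..t2} = ennreal ((t2-t1)/M)"
  proof -
    have "{0..M} \<inter> {t1<..t2} = {t1<..t2}" using assms by auto
    then show ?thesis using assms by (simp add: divide_ennreal)
  qed
  have e3: "emeasure ?N {t2<..} = ennreal ((M-t2)/M)"
  proof -
    have "{0..M} \<inter> {t2<..} = {t2<..M}" using assms by auto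
    then show ?thesis using assms by (simp add: divide_ennreal)
  qed
  have "(\<integral>\<^sup>+h. (if h \<le> t2 then (if h \<le> t1 then A else B) else C) \<partial>?N)
      = (\<integral>\<^sup>+h. A * indicator {..t1} h + B * indicator {t1<..t2} h + C * indicator {t2<..} h \<partial>?N)"
    by (simp only: pw)
  also have "\<dots> = (\<integral>\<^sup>+h. A * indicator {..t1} h \<partial>?N) + (\<integral>\<^sup>+h. B * indicator {t1<..t2} h \<partial>?N)
      + (\<integral>\<^sup>+h. C * indicator {t2<..} h \<partial>?N)"
    by (subst nn_integral_add; (subst nn_integral_add)?) auto
  also have "\<dots> = A * emeasure ?N {..t1} + B * emeasure ?N {t1<..t2} + C * emeasure ?N {t2<..}"
    by (subst nn_integral_cmult_indicator, simp)+ simp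
  finally show ?thesis by (simp add: e1 e2 e3 mult.commute)
qed

definition th :: "real \<Rightarrow> real \<Rightarrow> nat \<Rightarrow> real" where
  "th R a j = (R + real j * R) powr a"

definition gs :: "real \<Rightarrow> real \<Rightarrow> real \<Rightarrow> real \<Rightarrow> real \<Rightarrow> nat \<times> nat \<Rightarrow> real \<Rightarrow> nat \<times> nat" where
  "gs M R Dc Ds a x h = (if h \<le> M * th R a (snd x) / Dc
     then (Suc (fst x), if h \<le> M * th R a (snd x) / Ds then Suc (snd x) else snd x) else x)"

lemma mine_fwd:
  "mine_state M R Dc Ds (\<lambda>s. s powr a) w t
     = (fst (fwd (gs M R Dc Ds a) (0,0) w t), real (snd (fwd (gs M R Dc Ds a) (0,0) w t)) * R)"
proof (induction t)
  case 0 then show ?case by simp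
next
  case (Suc t)
  show ?case
    by (simp add: Suc Let_def gs_def th_def distrib_right add_ac)
qed

lemma gs_meas: "gs M R Dc Ds a i \<in> measurable (uniform_measure lborel {0..M}) (count_space UNIV)"
  unfolding gs_def by measurable

lemma gs_inv: "snd x \<le> fst x \<Longrightarrow> snd (gs M R Dc Ds a x h) \<le> fst (gs M R Dc Ds a x h) \<and> fst x \<le> fst (gs M R Dc Ds a x h)"
  by (auto simp: gs_def)

definition Hs :: "real \<Rightarrow> real \<Rightarrow> nat \<Rightarrow> nat \<Rightarrow> real" where
  "Hs p a K j = (\<Sum>m<K. U p m j powr a)"

lemma Hs_nonneg: "0 \<le> Hs p a K j"
  unfolding Hs_def by (intro sum_nonneg) auto

lemma Hs_step:
  assumes "0 < p" "p \<le> 1" "0 < a" "a < 1"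
  shows "U p 0 j powr a + p * Hs p a K (Suc j) + (1-p) * Hs p a K j \<le> Hs p a (Suc K) j"
proof -
  have "p * Hs p a K (Suc j) + (1-p) * Hs p a K j = (\<Sum>m<K. p * U p m (Suc j) powr a + (1-p) * U p m j powr a)"
    by (simp add: Hs_def sum_distrib_left sum.distrib)
  also have "\<dots> \<le> (\<Sum>m<K. U p (Suc m) j powr a)"
    unfolding U_Suc using assms
    by (intro sum_mono concave_powr_mix U_nonneg) auto
  finally have c: "p * Hs p a K (Suc j) + (1-p) * Hs p a K j \<le> (\<Sum>m<K. U p (Suc m) j powr a)" .
  have eq: "Hs p a (Suc K) j = U p 0 j powr a + (\<Sum>m<K. U p (Suc m) j powr a)"
    unfolding Hs_def by (rule sum.lessThan_Suc_shift)
  show ?thesis using c eq by linarith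
qed

lemma real_step:
  fixes th Dc Ds FA FB FC :: real
  assumes "0 < th" "0 < Dc" "Dc \<le> Ds"
    and h: "Dc / th + (Dc/Ds) * FA + (1 - Dc/Ds) * FB \<le> FC"
  shows "1 + th/Ds*FA + (th/Dc - th/Ds)*FB + (1 - th/Dc)*FC \<le> FC"
proof -
  have "th/Dc * (Dc / th + (Dc/Ds) * FA + (1 - Dc/Ds) * FB) \<le> th/Dc * FC"
    using h assms by (intro mult_left_mono) auto
  moreover have "th/Dc * (Dc / th + (Dc/Ds) * FA + (1 - Dc/Ds) * FB) = 1 + th/Ds*FA + (th/Dc - th/Ds)*FB"
    using assms by (simp add: field_simps)
  ultimately show ?thesis by (simp add: algebra_simps)
qed

lemma cU0:
  assumes "R > 0"
  shows "Dc / R powr a * U p 0 j powr a = Dc / th R a j"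
proof -
  have "th R a j = R powr a * (real j + 1) powr a"
    unfolding th_def using assms by (simp add: powr_mult[symmetric] algebra_simps)
  then show ?thesis using assms by (simp add: U_0 powr_divide)
qed

definition FF :: "real \<Rightarrow> real \<Rightarrow> real \<Rightarrow> nat \<Rightarrow> nat \<times> nat \<Rightarrow> ennreal" where
  "FF c p a L x = (if fst x < snd x then \<top> else ennreal (c * Hs p a (L - fst x) (snd x)))"



lemma ennreal_lin3:
  fixes u1 u2 u3 x y z :: real
  assumes "0 \<le> u1" "0 \<le> u2" "0 \<le> u3" "0 \<le> x" "0 \<le> y" "0 \<le> z"
  shows "1 + (ennreal u1 * ennreal x + ennreal u2 * ennreal y + ennreal u3 * ennreal z)
      = ennreal (1 + (u1 * x + u2 * y + u3 * z))"
proof -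
  have a: "ennreal (u1 * x + u2 * y + u3 * z) = ennreal (u1*x) + ennreal (u2*y) + ennreal (u3*z)"
    using assms by (simp add: ennreal_plus add_nonneg_nonneg)
  have b: "ennreal (1 + (u1 * x + u2 * y + u3 * z)) = 1 + ennreal (u1 * x + u2 * y + u3 * z)"
    using assms by (simp add: ennreal_plus add_nonneg_nonneg)
  show ?thesis unfolding b a using assms by (simp add: ennreal_mult)
qed

lemma FF_step:
  fixes M R Dc Ds a :: real and L :: nat
  assumes M: "M > 0" and R: "R > 0" and Dc: "0 < Dc" "Dc \<le> Ds" and a: "0 < a" "a < 1"
    and thb: "\<forall>k<L. 0 < th R a k \<and> th R a k \<le> Dc"
  shows "(if fst x < L then 1 else 0) + (\<integral>\<^sup>+h. FF (Dc / R powr a) (Dc/Ds) a L (gs M R Dc Ds a x h) \<partial>uniform_measure lborel {0..M})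
     \<le> FF (Dc / R powr a) (Dc/Ds) a L x"
proof (cases x)
  case (Pair n j)
  define c where "c = Dc / R powr a"
  define p where "p = Dc / Ds"
  have c0: "0 \<le> c" using Dc R by (simp add: c_def)
  have p: "0 < p" "p \<le> 1" using Dc by (auto simp: p_def)
  consider "n < j" | "j \<le> n" "L \<le> n" | "j \<le> n" "n < L" by linarith
  then show ?thesis
  proof cases
    case 1 then show ?thesis by (simp add: Pair FF_def)
  next
    case 2
    have "FF c p a L (gs M R Dc Ds a x h) = 0" for h
      using gs_inv[of x M R Dc Ds a h] 2 by (auto simp: Pair FF_def Hs_def)
    then show ?thesis using 2 by (simp add: Pair c_def p_def)
  next
    case 3
    define \<theta> where "\<theta> = th R a j"
    have th: "0 < \<theta>" "\<theta> \<le> Dc" using thb 3 by (auto simp: \<theta>_def)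
    define t1 where "t1 = M * \<theta> / Ds"
    define t2 where "t2 = M * \<theta> / Dc"
    define K where "K = L - Suc n"
    have LK: "L - n = Suc K" using 3 by (simp add: K_def)
    define FA where "FA = c * Hs p a K (Suc j)"
    define FB where "FB = c * Hs p a K j"
    define FC where "FC = c * Hs p a (Suc K) j"
    have F0: "0 \<le> FA" "0 \<le> FB" "0 \<le> FC" using c0 by (auto simp: FA_def FB_def FC_def Hs_nonneg)
    have t: "0 \<le> t1" "t1 \<le> t2" "t2 \<le> M"
    proof -
      show "0 \<le> t1" using M th Dc by (simp add: t1_def)
      show "t1 \<le> t2" unfolding t1_def t2_def using M th Dc
        by (intro divide_left_mono mult_pos_pos) auto
      show "t2 \<le> M" unfolding t2_def using M th Dc by (simp add: field_simps)
    qed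
    have pw: "FF c p a L (gs M R Dc Ds a x h) = (if h \<le> t2 then (if h \<le> t1 then ennreal FA else ennreal FB) else ennreal FC)" for h
      using 3 LK by (simp add: Pair gs_def FF_def t1_def t2_def \<theta>_def FA_def FB_def FC_def K_def)
    have int: "(\<integral>\<^sup>+h. FF c p a L (gs M R Dc Ds a x h) \<partial>uniform_measure lborel {0..M})
       = ennreal (t1/M) * ennreal FA + ennreal ((t2-t1)/M) * ennreal FB + ennreal ((M-t2)/M) * ennreal FC"
      unfolding pw by (rule int3[OF M t])
    have nn: "0 \<le> t1/M" "0 \<le> (t2-t1)/M" "0 \<le> (M-t2)/M" using t M by auto
    have e: "1 + (ennreal (t1/M) * ennreal FA + ennreal ((t2-t1)/M) * ennreal FB + ennreal ((M-t2)/M) * ennreal FC)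
      = ennreal (1 + (t1/M * FA + (t2-t1)/M * FB + (M-t2)/M * FC))"
      using nn F0 by (rule ennreal_lin3)
    have hyp: "Dc / \<theta> + p * FA + (1 - p) * FB \<le> FC"
    proof -
      have "c * (U p 0 j powr a + p * Hs p a K (Suc j) + (1-p) * Hs p a K j) \<le> c * Hs p a (Suc K) j"
        using Hs_step[OF p a] c0 by (intro mult_left_mono) auto
      moreover have "c * U p 0 j powr a = Dc / \<theta>" using cU0[OF R] by (simp add: c_def \<theta>_def)
      ultimately show ?thesis by (simp add: FA_def FB_def FC_def algebra_simps)
    qed
    have r: "1 + \<theta>/Ds*FA + (\<theta>/Dc - \<theta>/Ds)*FB + (1 - \<theta>/Dc)*FC \<le> FC"
      using real_step[OF th(1) Dc(1) Dc(2)] hyp by (simp add: p_def)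
    have r2: "1 + (t1/M * FA + (t2-t1)/M * FB + (M-t2)/M * FC) \<le> FC"
    proof -
      have "t1/M = \<theta>/Ds" "(t2-t1)/M = \<theta>/Dc - \<theta>/Ds" "(M-t2)/M = 1 - \<theta>/Dc"
        using M by (auto simp: t1_def t2_def field_simps)
      then show ?thesis using r by simp
    qed
    have "FF c p a L x = ennreal FC" using 3 LK by (simp add: Pair FF_def FC_def)
    then show ?thesis
      using 3 r2 unfolding c_def[symmetric] p_def[symmetric] int
      by (simp add: Pair e ennreal_leI del: ennreal_plus)
  qed
qed



lemma final_bound:
  fixes R Dc Ds a :: real and L :: nat
  assumes R: "R > 0" and Dc: "0 < Dc" "Dc \<le> Ds" and a: "0 < a" "a < 1"
  shows "Dc / R powr a * Hs (Dc/Ds) a L 0 \<le> Ds / R powr a * (\<Sum>n<L. 1 / (real n + 1) powr a)"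
proof -
  define p where "p = Dc / Ds"
  have p: "0 < p" "p \<le> 1" using Dc by (auto simp: p_def)
  have trm: "U p m 0 powr a \<le> (1/p) * (1 / (real m + 1) powr a)" for m
  proof -
    have "U p m 0 powr a \<le> (1 / (p * (real m + 1))) powr a"
      using U_bound[OF p, of m] U_nonneg[of p m 0] p a by (intro powr_mono2) auto
    also have "\<dots> = (1/p) powr a / (real m + 1) powr a"
      using p by (simp add: powr_divide[symmetric])
    also have "\<dots> \<le> (1/p) / (real m + 1) powr a"
    proof -
      have "(1/p) powr a \<le> (1/p) powr 1" using p a by (intro powr_mono) auto
      then have "(1/p) powr a \<le> 1/p" using p by simp
      then show ?thesis by (intro divide_right_mono) auto
    qed
    finally show ?thesis by simp
  qed
  have "Hs p a L 0 \<le> (\<Sum>n<L. (1/p) * (1 / (real n + 1) powr a))"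
    unfolding Hs_def by (intro sum_mono trm)
  then have "Dc / R powr a * Hs p a L 0 \<le> Dc / R powr a * (\<Sum>n<L. (1/p) * (1 / (real n + 1) powr a))"
    using Dc R by (intro mult_left_mono) auto
  also have "\<dots> = Dc / R powr a * ((1/p) * (\<Sum>n<L. 1 / (real n + 1) powr a))"
    by (simp only: sum_distrib_left)
  also have "\<dots> = Ds / R powr a * (\<Sum>n<L. 1 / (real n + 1) powr a)"
    using Dc by (simp add: p_def)
  finally show ?thesis by (simp add: p_def)
qed

theorem mainTheorem4:
  fixes M R Dc Ds a :: real and L :: nat
  assumes "M > 0" and "R > 0" and "0 < Dc" and "Dc \<le> Ds"
    and "0 < a" and "a < 1" and "L \<ge> 1"
    and "\<forall>k<L. 0 < (R + real k * R) powr a \<and> (R + real k * R) powr a \<le> Dc"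
  shows "(\<integral>\<^sup>+ w. mining_time M R Dc Ds (\<lambda>s. s powr a) L w \<partial>hash_space M)
           \<le> ennreal (Ds / R powr a * (\<Sum>n<L. 1 / (real n + 1) powr a))"
proof -
  let ?N = "uniform_measure lborel {0..M}"
  have P: "prob_space ?N" using assms(1) by (intro prob_space_uniform_measure) auto
  define g where "g = gs M R Dc Ds a"
  define ind :: "nat \<times> nat \<Rightarrow> ennreal" where "ind x = (if fst x < L then 1 else 0)" for x
  define F where "F = FF (Dc / R powr a) (Dc/Ds) a L"
  have thb: "\<forall>k<L. 0 < th R a k \<and> th R a k \<le> Dc" using assms(8) by (simp add: th_def)
  define f where "f T w = (\<Sum>t<T. ind (fwd g (0,0) w t))" for T w
  have bound: "(\<integral>\<^sup>+w. f T w \<partial>stream_space ?N) \<le> F (0,0)" for T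
    unfolding f_def g_def F_def
    by (rule fwd_bound[OF P gs_meas]) (unfold ind_def, rule FF_step[OF assms(1-6) thb])
  have mt: "mining_time M R Dc Ds (\<lambda>s. s powr a) L w = (SUP T. f T w)" for w
    unfolding mining_time_def mine_fwd
    by (simp add: nn_integral_count_space_nat suminf_eq_SUP ind_def g_def f_def)
  have meas: "f T \<in> borel_measurable (stream_space ?N)" for T
  proof -
    have "(\<lambda>w. ind (fwd g (0,0) w t)) \<in> borel_measurable (stream_space ?N)" for t
      unfolding g_def by (rule measurable_compose[OF fwd_meas[OF gs_meas]]) simp
    then show ?thesis unfolding f_def by (intro borel_measurable_sum) auto
  qed
  have inc: "incseq f"
    unfolding f_def by (intro monoI le_funI sum_mono2) auto
  have "(\<integral>\<^sup>+ w. mining_time M R Dc Ds (\<lambda>s. s powr a) L w \<partial>hash_space M)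
      = (\<integral>\<^sup>+ w. (SUP T. f T w) \<partial>stream_space ?N)"
    by (simp add: hash_space_def mt)
  also have "\<dots> = (SUP T. (\<integral>\<^sup>+w. f T w \<partial>stream_space ?N))"
    by (rule nn_integral_monotone_convergence_SUP[OF inc meas])
  also have "\<dots> \<le> F (0,0)"
    by (rule SUP_least) (rule bound)
  also have "\<dots> = ennreal (Dc / R powr a * Hs (Dc/Ds) a L 0)"
    by (simp add: F_def FF_def)
  also have "\<dots> \<le> ennreal (Ds / R powr a * (\<Sum>n<L. 1 / (real n + 1) powr a))"
    by (intro ennreal_leI final_bound) (use assms in auto)
  finally show ?thesis .
qed

end
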